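(* Let $E$ be a nonzero reflexive real Banach space, $S,T\colon E\rightrightarrows E^*$ be maximally monotone, and suppose $\mathrm{dom}\,\varphi_S+\rho_1\mathrm{dom}\,\varphi_T=E\times E^*$. Then $(S+T)(E)=E^*$.
   Context: $\rho_1(x,x^* ):=(-x,x^* )$. For monotone $S$ with nonempty graph $G(S)$, $\varphi_S(x,x^* ):=\sup_{(s,s^* )\in G(S)}[\langle x,s^*\rangle+\langle s,x^*\rangle-\langle s,s^*\rangle]$, and $\mathrm{dom}\,\varphi_S:=\{(x,x^* )\colon \varphi_S(x,x^* )\in\mathbb{R}\}$. $(S+T)x:=\{y+z\colon y\in Sx,z\in Tx\}$ and $(S+T)(E):=\bigcup_{x\in E}(S+T)x$. *)

theory Defs
  imports "HOL-Analysis.Analysis"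
begin

(* E* is modelled as bounded linear functionals 'a =>L real; pairing = blinfun_apply *)

definition reflexive_space :: "'a::banach itself \<Rightarrow> bool" where
  "reflexive_space _ \<longleftrightarrow>
     (\<forall>\<Phi> :: ('a \<Rightarrow>\<^sub>L real) \<Rightarrow>\<^sub>L real. \<exists>x::'a. \<forall>f. blinfun_apply \<Phi> f = blinfun_apply f x)"

definition graph :: "('a \<Rightarrow> 'b set) \<Rightarrow> ('a \<times> 'b) set" where
  "graph S = {(x, y). y \<in> S x}"

definition monotone_op :: "('a::real_normed_vector \<Rightarrow> ('a \<Rightarrow>\<^sub>L real) set) \<Rightarrow> bool" where
  "monotone_op S \<longleftrightarrow>
     (\<forall>x y xs ys. xs \<in> S x \<longrightarrow> ys \<in> S y \<longrightarrow> 0 \<le> blinfun_apply (xs - ys) (x - y))"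

definition maximal_monotone :: "('a::real_normed_vector \<Rightarrow> ('a \<Rightarrow>\<^sub>L real) set) \<Rightarrow> bool" where
  "maximal_monotone S \<longleftrightarrow> monotone_op S \<and>
     (\<forall>T. monotone_op T \<longrightarrow> graph S \<subseteq> graph T \<longrightarrow> graph T = graph S)"

definition fitzpatrick :: "('a::real_normed_vector \<Rightarrow> ('a \<Rightarrow>\<^sub>L real) set)
    \<Rightarrow> 'a \<times> ('a \<Rightarrow>\<^sub>L real) \<Rightarrow> ereal" where
  "fitzpatrick S p = (SUP q \<in> graph S.
      ereal (blinfun_apply (snd q) (fst p) + blinfun_apply (snd p) (fst q)
             - blinfun_apply (snd q) (fst q)))"

definition dom_fitz :: "('a::real_normed_vector \<Rightarrow> ('a \<Rightarrow>\<^sub>L real) set)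
    \<Rightarrow> ('a \<times> ('a \<Rightarrow>\<^sub>L real)) set" where
  "dom_fitz S = {p. fitzpatrick S p \<in> range ereal}"

definition rho1 :: "'a::real_normed_vector \<times> 'b \<Rightarrow> 'a \<times> 'b" where
  "rho1 p = (- fst p, snd p)"

definition op_sum :: "('a \<Rightarrow> 'b::plus set) \<Rightarrow> ('a \<Rightarrow> 'b set) \<Rightarrow> 'a \<Rightarrow> 'b set" where
  "op_sum S T x = {y + z | y z. y \<in> S x \<and> z \<in> T x}"

end

theory Submission
  imports Defs
begin


definition sublin :: "('v::real_vector \<Rightarrow> real) \<Rightarrow> bool" where
  "sublin q \<longleftrightarrow> (\<forall>x y. q (x + y) \<le> q x + q y) \<and> (\<forall>a x. a > 0 \<longrightarrow> q (a *\<^sub>R x) = a * q x)"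

lemma sublin_0: "sublin q \<Longrightarrow> q 0 = 0"
  unfolding sublin_def by (metis mult_2 scaleR_zero_right zero_less_numeral add_cancel_right_right)

lemma sublin_neg: "sublin q \<Longrightarrow> - q (- x) \<le> q x"
proof -
  assume s: "sublin q"
  have "q (x + - x) \<le> q x + q (-x)" using s unfolding sublin_def by blast
  then show ?thesis using sublin_0[OF s] by simp
qed

lemma chain_inf_sublin:
  fixes C :: "('v::real_vector \<Rightarrow> real) set"
  assumes ne: "C \<noteq> {}" and sub: "\<And>q. q \<in> C \<Longrightarrow> sublin q \<and> (\<forall>x. q x \<le> p x)"
    and ch: "\<And>q1 q2. q1 \<in> C \<Longrightarrow> q2 \<in> C \<Longrightarrow> (\<forall>x. q1 x \<le> q2 x) \<or> (\<forall>x. q2 x \<le> q1 x)"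
  shows "sublin (\<lambda>x. Inf ((\<lambda>q. q x) ` C)) \<and> (\<forall>x. Inf ((\<lambda>q. q x) ` C) \<le> p x)
     \<and> (\<forall>q\<in>C. \<forall>x. Inf ((\<lambda>q. q x) ` C) \<le> q x)"
proof -
  define m where "m x = Inf ((\<lambda>q. q x) ` C)" for x
  have bdd: "bdd_below ((\<lambda>q. q x) ` C)" for x
  proof (rule bdd_belowI2)
    fix q assume "q \<in> C"
    then have "- q (- x) \<le> q x" "q (-x) \<le> p (-x)" using sub sublin_neg by blast+
    then show "- p (-x) \<le> q x" by linarith
  qed
  have low: "m x \<le> q x" if "q \<in> C" for q x
    unfolding m_def using bdd that by (simp add: cInf_lower)
  have great: "c \<le> m x" if "\<And>q. q \<in> C \<Longrightarrow> c \<le> q x" for c x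
    unfolding m_def using ne that by (simp add: cINF_greatest)
  have add: "m (x + y) \<le> m x + m y" for x y
  proof -
    have "m (x + y) - q2 y \<le> m x" if q2: "q2 \<in> C" for q2
    proof (rule great)
      fix q1 assume q1: "q1 \<in> C"
      have "m (x+y) \<le> q1 x + q2 y"
      proof (cases "\<forall>z. q1 z \<le> q2 z")
        case True
        then have "m (x+y) \<le> q1 (x+y)" "q1 (x+y) \<le> q1 x + q1 y" "q1 y \<le> q2 y"
          using low q1 sub unfolding sublin_def by blast+
        then show ?thesis by linarith
      next
        case False
        then have le: "\<forall>z. q2 z \<le> q1 z" using ch q1 q2 by blast
        then have "m (x+y) \<le> q2 (x+y)" "q2 (x+y) \<le> q2 x + q2 y" "q2 x \<le> q1 x"
          using low q2 sub unfolding sublin_def by blast+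
        then show ?thesis by linarith
      qed
      then show "m (x + y) - q2 y \<le> q1 x" by linarith
    qed
    then have "m (x + y) - m x \<le> q2 y" if "q2 \<in> C" for q2 using that by force
    then have "m (x + y) - m x \<le> m y" by (intro great) auto
    then show ?thesis by linarith
  qed
  have hom: "m (a *\<^sub>R x) = a * m x" if a: "a > 0" for a x
  proof (rule antisym)
    show "a * m x \<le> m (a *\<^sub>R x)"
    proof (rule great)
      fix q assume q: "q \<in> C"
      have "a * m x \<le> a * q x" using low[OF q] a by simp
      also have "\<dots> = q (a *\<^sub>R x)" using sub[OF q] a unfolding sublin_def by metis
      finally show "a * m x \<le> q (a *\<^sub>R x)" .
    qed
    have "m (a *\<^sub>R x) / a \<le> m x"
    proof -
      have "m (a *\<^sub>R x) \<le> a * q x" if q: "q \<in> C" for q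
        using low[OF q, of "a *\<^sub>R x"] sub[OF q] a unfolding sublin_def by metis
      then have "m (a *\<^sub>R x) / a \<le> q x" if q: "q \<in> C" for q
        using that a by (simp add: field_simps)
      then show ?thesis by (intro great) auto
    qed
    then show "m (a *\<^sub>R x) \<le> a * m x" using a by (simp add: field_simps)
  qed
  have "m x \<le> p x" for x
  proof -
    obtain q where "q \<in> C" using ne by blast
    then show ?thesis using low sub by (meson order_trans)
  qed
  then show ?thesis using add hom low unfolding sublin_def m_def[symmetric] by blast
qed

lemma minimal_sublin_linear:
  fixes q :: "'v::real_vector \<Rightarrow> real"
  assumes s: "sublin q"
    and minl: "\<And>r. sublin r \<Longrightarrow> (\<forall>x. r x \<le> q x) \<Longrightarrow> r = q"
  shows "q (- a) = - q a"
proof -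
  define r where "r x = Inf ((\<lambda>t. q (x + t *\<^sub>R a) - t * q a) ` {0..})" for x
  have qadd: "q (x + y) \<le> q x + q y" for x y using s unfolding sublin_def by blast
  have qhom: "t \<ge> 0 \<Longrightarrow> q (t *\<^sub>R x) = t * q x" for t x
    using s sublin_0[OF s] unfolding sublin_def by (cases "t = 0") auto
  have lb: "- q (- x) \<le> q (x + t *\<^sub>R a) - t * q a" if "t \<ge> 0" for x t
  proof -
    have "q (x + t *\<^sub>R a + - x) \<le> q (x + t *\<^sub>R a) + q (-x)" by (rule qadd)
    then show ?thesis using qhom[OF that] by simp
  qed
  have bdd: "bdd_below ((\<lambda>t. q (x + t *\<^sub>R a) - t * q a) ` {0..})" for x
    using lb by (intro bdd_belowI2) auto
  have low: "r x \<le> q (x + t *\<^sub>R a) - t * q a" if "t \<ge> 0" for x t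
    unfolding r_def using bdd that by (intro cInf_lower) auto
  have great: "c \<le> r x" if "\<And>t. t \<ge> 0 \<Longrightarrow> c \<le> q (x + t *\<^sub>R a) - t * q a" for c x
    unfolding r_def using that by (intro cINF_greatest) auto
  have rle: "r x \<le> q x" for x using low[of 0 x] by simp
  have radd: "r (x + y) \<le> r x + r y" for x y
  proof -
    have "r (x + y) - (q (y + s *\<^sub>R a) - s * q a) \<le> r x" if s: "s \<ge> 0" for s
    proof (rule great)
      fix t :: real assume t: "t \<ge> 0"
      have "r (x + y) \<le> q (x + y + (t + s) *\<^sub>R a) - (t + s) * q a"
        using low t s by simp
      also have "q (x + y + (t + s) *\<^sub>R a) \<le> q (x + t *\<^sub>R a) + q (y + s *\<^sub>R a)"
        using qadd[of "x + t *\<^sub>R a" "y + s *\<^sub>R a"] by (simp add: algebra_simps)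
      finally show "r (x + y) - (q (y + s *\<^sub>R a) - s * q a) \<le> q (x + t *\<^sub>R a) - t * q a"
        by (simp add: algebra_simps)
    qed
    then have "r (x + y) - r x \<le> q (y + s *\<^sub>R a) - s * q a" if "s \<ge> 0" for s
      using that by force
    then have "r (x + y) - r x \<le> r y" by (intro great) auto
    then show ?thesis by linarith
  qed
  have rhom: "r (c *\<^sub>R x) = c * r x" if c: "c > 0" for c x
  proof (rule antisym)
    have "r (c *\<^sub>R x) / c \<le> r x"
    proof (rule great)
      fix t :: real assume t: "t \<ge> 0"
      have "r (c *\<^sub>R x) \<le> q (c *\<^sub>R x + (c * t) *\<^sub>R a) - (c * t) * q a"
        using low c t by simp
      also have "q (c *\<^sub>R x + (c * t) *\<^sub>R a) = c * q (x + t *\<^sub>R a)"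
        using qhom[of c "x + t *\<^sub>R a"] c by (simp add: algebra_simps)
      finally show "r (c *\<^sub>R x) / c \<le> q (x + t *\<^sub>R a) - t * q a"
        using c by (simp add: field_simps)
    qed
    then show "r (c *\<^sub>R x) \<le> c * r x" using c by (simp add: field_simps)
    show "c * r x \<le> r (c *\<^sub>R x)"
    proof (rule great)
      fix t :: real assume t: "t \<ge> 0"
      have "r x \<le> q (x + (t / c) *\<^sub>R a) - (t / c) * q a"
        using low[of "t / c" x] c t by simp
      then have "c * r x \<le> c * q (x + (t / c) *\<^sub>R a) - t * q a"
        using c by (simp add: field_simps)
      also have "c * q (x + (t / c) *\<^sub>R a) = q (c *\<^sub>R (x + (t / c) *\<^sub>R a))"
        using qhom c by simp
      also have "c *\<^sub>R (x + (t / c) *\<^sub>R a) = c *\<^sub>R x + t *\<^sub>R a"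
        using c by (simp add: algebra_simps)
      finally show "c * r x \<le> q (c *\<^sub>R x + t *\<^sub>R a) - t * q a" .
    qed
  qed
  have "sublin r" unfolding sublin_def using radd rhom by blast
  then have "r = q" using minl rle by blast
  then have "q (- a) \<le> q (- a + 1 *\<^sub>R a) - 1 * q a" using low[of 1 "-a"] by simp
  then have "q (- a) \<le> - q a" using sublin_0[OF s] by simp
  moreover have "- q a \<le> q (- a)" using sublin_neg[OF s, of "-a"] by simp
  ultimately show ?thesis by linarith
qed

lemma hahn_banach_sublin:
  fixes p :: "'v::real_vector \<Rightarrow> real"
  assumes "sublin p"
  shows "\<exists>l. linear l \<and> (\<forall>x. l x \<le> p x)"
proof -
  define A where "A = {q :: 'v \<Rightarrow> real. sublin q \<and> (\<forall>x. q x \<le> p x)}"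
  define P where "P = (\<lambda>q1 q2 :: 'v \<Rightarrow> real. \<forall>x. q2 x \<le> q1 x)"
  have po: "partial_order_on A (relation_of P A)"
    unfolding partial_order_on_def preorder_on_def refl_on_def trans_def antisym_def relation_of_def P_def
    by (auto simp: fun_eq_iff intro: order_trans antisym)
  have "\<exists>m\<in>A. \<forall>a\<in>A. P m a \<longrightarrow> a = m"
  proof (rule predicate_Zorn[OF po])
    fix C assume C: "C \<in> Chains (relation_of P A)"
    then have CA: "C \<subseteq> A" unfolding Chains_def relation_of_def by auto
    show "\<exists>u\<in>A. \<forall>a\<in>C. P a u"
    proof (cases "C = {}")
      case True then show ?thesis using assms unfolding A_def by auto
    next
      case False
      have ch: "(\<forall>x. q1 x \<le> q2 x) \<or> (\<forall>x. q2 x \<le> q1 x)" if "q1 \<in> C" "q2 \<in> C" for q1 q2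
        using C that unfolding Chains_def relation_of_def P_def by blast
      from chain_inf_sublin[OF False, of p] CA ch
      show ?thesis unfolding A_def P_def by (intro bexI[of _ "\<lambda>x. Inf ((\<lambda>q. q x) ` C)"]) auto
    qed
  qed
  then obtain m where mA: "m \<in> A" and mmin: "\<And>a. a \<in> A \<Longrightarrow> P m a \<Longrightarrow> a = m" by blast
  have sm: "sublin m" using mA unfolding A_def by blast
  have neg: "m (- a) = - m a" for a
  proof (rule minimal_sublin_linear[OF sm])
    fix r assume "sublin r" "\<forall>x. r x \<le> m x"
    moreover have "\<forall>x. m x \<le> p x" using mA unfolding A_def by blast
    ultimately have "r \<in> A" "P m r" unfolding A_def P_def by (auto intro: order_trans)
    then show "r = m" using mmin by blast
  qed
  have madd: "m (x + y) = m x + m y" for x y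
  proof -
    have "m (x + y) \<le> m x + m y" using sm unfolding sublin_def by blast
    moreover have "m (x + y + - y) \<le> m (x + y) + m (- y)" using sm unfolding sublin_def by blast
    ultimately show ?thesis using neg[of y] by simp
  qed
  have mhom: "m (c *\<^sub>R x) = c * m x" for c x
  proof (cases c "0::real" rule: linorder_cases)
    case less
    then have "m ((- c) *\<^sub>R x) = - c * m x" using sm unfolding sublin_def by (metis neg_0_less_iff_less)
    then show ?thesis using neg[of "(- c) *\<^sub>R x"] by simp
  next
    case equal then show ?thesis using sublin_0[OF sm] by simp
  next
    case greater then show ?thesis using sm unfolding sublin_def by auto
  qed
  have "linear m" by (rule linearI) (use madd mhom in auto)
  then show ?thesis using mA unfolding A_def by blast
qed



definition aff :: "('a::real_normed_vector \<times> ('a \<Rightarrow>\<^sub>L real)) \<Rightarrow> ('a \<times> ('a \<Rightarrow>\<^sub>L real)) \<Rightarrow> real" where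
  "aff g p = blinfun_apply (snd g) (fst p) + blinfun_apply (snd p) (fst g) - blinfun_apply (snd g) (fst g)"

definition fb :: "('a::real_normed_vector \<Rightarrow> ('a \<Rightarrow>\<^sub>L real) set) \<Rightarrow> ('a \<times> ('a \<Rightarrow>\<^sub>L real)) \<Rightarrow> real \<Rightarrow> bool" where
  "fb S p c \<longleftrightarrow> (\<forall>g\<in>graph S. aff g p \<le> c)"

lemma dom_fitz_fb: "p \<in> dom_fitz S \<Longrightarrow> \<exists>c. fb S p c"
proof -
  assume "p \<in> dom_fitz S"
  then obtain r where r: "fitzpatrick S p = ereal r" unfolding dom_fitz_def by blast
  have "aff g p \<le> r" if "g \<in> graph S" for g
  proof -
    have "ereal (aff g p) \<le> fitzpatrick S p"
      unfolding fitzpatrick_def aff_def using that by (intro SUP_upper2[OF that]) auto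
    then show ?thesis using r by simp
  qed
  then show ?thesis unfolding fb_def by blast
qed

lemma fb_mono: "fb S p c \<Longrightarrow> c \<le> d \<Longrightarrow> fb S p d"
  unfolding fb_def by force

lemma max_mono_in:
  assumes m: "maximal_monotone S"
    and rel: "\<And>s s'. s' \<in> S s \<Longrightarrow> 0 \<le> blinfun_apply (x' - s') (x - s)"
  shows "x' \<in> S x"
proof -
  define T where "T y = S y \<union> (if y = x then {x'} else {})" for y
  have sym: "blinfun_apply (a - b) (u - v) = blinfun_apply (b - a) (v - u)" for a b :: "'a \<Rightarrow>\<^sub>L real" and u v :: 'a
    by (simp add: blinfun.diff_left blinfun.diff_right)
  have "monotone_op T"
    unfolding monotone_op_def
  proof (intro allI impI)
    fix y z ys zs assume ys: "ys \<in> T y" and zs: "zs \<in> T z"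
    show "0 \<le> blinfun_apply (ys - zs) (y - z)"
    proof (cases "ys \<in> S y")
      case ysS: True
      show ?thesis
      proof (cases "zs \<in> S z")
        case True then show ?thesis using ysS m unfolding maximal_monotone_def monotone_op_def by blast
      next
        case False then have "z = x" "zs = x'" using zs unfolding T_def by (auto split: if_splits)
        then show ?thesis using rel[OF ysS] sym by metis
      qed
    next
      case False then have yx: "y = x" "ys = x'" using ys unfolding T_def by (auto split: if_splits)
      show ?thesis
      proof (cases "zs \<in> S z")
        case True then show ?thesis using rel[OF True] yx by simp
      next
        case False then have "z = x" "zs = x'" using zs unfolding T_def by (auto split: if_splits)
        then show ?thesis using yx by simp
      qed
    qed
  qed
  moreover have "graph S \<subseteq> graph T" unfolding graph_def T_def by auto
  ultimately have "graph T = graph S" using m unfolding maximal_monotone_def by blast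
  moreover have "(x, x') \<in> graph T" unfolding graph_def T_def by auto
  ultimately show ?thesis unfolding graph_def by auto
qed

lemma fb_ge:
  assumes m: "maximal_monotone S" and f: "fb S (x, x') c"
  shows "blinfun_apply x' x \<le> c"
proof (rule ccontr)
  assume c: "\<not> blinfun_apply x' x \<le> c"
  have "0 \<le> blinfun_apply (x' - s') (x - s)" if "s' \<in> S s" for s s'
  proof -
    have "aff (s, s') (x, x') \<le> c" using f that unfolding fb_def graph_def by auto
    then show ?thesis using c unfolding aff_def by (simp add: blinfun.diff_left blinfun.diff_right)
  qed
  then have "x' \<in> S x" by (rule max_mono_in[OF m])
  then have "aff (x, x') (x, x') \<le> c" using f unfolding fb_def graph_def by auto
  then show False using c unfolding aff_def by simp
qed

lemma graph_fb:
  assumes m: "monotone_op S" and s: "s' \<in> S s"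
  shows "fb S (s, s') (blinfun_apply s' s)"
  unfolding fb_def
proof
  fix g assume g: "g \<in> graph S"
  then obtain u u' where g': "g = (u, u')" "u' \<in> S u" unfolding graph_def by auto
  have "0 \<le> blinfun_apply (s' - u') (s - u)" using m s g' unfolding monotone_op_def by blast
  then show "aff g (s, s') \<le> blinfun_apply s' s"
    unfolding g' aff_def by (simp add: blinfun.diff_left blinfun.diff_right)
qed

lemma aff_comb: "aff g (a *\<^sub>R p1 + b *\<^sub>R p2) = a * aff g p1 + b * aff g p2 + (1 - a - b) * (- blinfun_apply (snd g) (fst g))"
  unfolding aff_def by (simp add: blinfun.add_right blinfun.scaleR_right blinfun.add_left blinfun.scaleR_left algebra_simps)

lemma fb_convex:
  assumes "fb S p1 c1" "fb S p2 c2" "0 \<le> l" "l \<le> 1"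
  shows "fb S (l *\<^sub>R p1 + (1 - l) *\<^sub>R p2) (l * c1 + (1 - l) * c2)"
  unfolding fb_def
proof
  fix g assume g: "g \<in> graph S"
  have "aff g p1 \<le> c1" "aff g p2 \<le> c2" using assms g unfolding fb_def by auto
  then have "l * aff g p1 + (1 - l) * aff g p2 \<le> l * c1 + (1 - l) * c2"
    using assms by (intro add_mono mult_left_mono) auto
  then show "aff g (l *\<^sub>R p1 + (1 - l) *\<^sub>R p2) \<le> l * c1 + (1 - l) * c2"
    by (simp add: aff_comb)
qed



definition Vals :: "('a::real_normed_vector \<Rightarrow> ('a \<Rightarrow>\<^sub>L real) set) \<Rightarrow> ('a \<Rightarrow> ('a \<Rightarrow>\<^sub>L real) set)
   \<Rightarrow> ('a \<Rightarrow>\<^sub>L real) \<Rightarrow> 'a \<times> ('a \<Rightarrow>\<^sub>L real) \<Rightarrow> real set" where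
  "Vals S T z w = {c1 + c2 - blinfun_apply z (fst p) | p r c1 c2. fb S p c1 \<and> fb T r c2 \<and> p + rho1 r = w}"

lemma rho1_comb: "rho1 (a *\<^sub>R r1 + b *\<^sub>R r2) = a *\<^sub>R rho1 r1 + b *\<^sub>R rho1 r2"
  unfolding rho1_def by (simp add: algebra_simps)

lemma vals_nonneg:
  assumes "maximal_monotone S" "maximal_monotone T" "v \<in> Vals S T z (0, z)"
  shows "0 \<le> v"
proof -
  obtain p r c1 c2 where v: "v = c1 + c2 - blinfun_apply z (fst p)" and f: "fb S p c1" "fb T r c2"
    and w: "p + rho1 r = (0, z)" using assms(3) unfolding Vals_def by blast
  obtain x x' where p: "p = (x, x')" by fastforce
  obtain u u' where r: "r = (u, u')" by fastforce
  have "x - u = 0" "x' + u' = z" using w unfolding p r rho1_def by auto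
  then have u: "u = x" "u' = z - x'" by auto
  have "blinfun_apply x' x \<le> c1" using fb_ge[OF assms(1)] f p by blast
  moreover have "blinfun_apply (z - x') x \<le> c2" using fb_ge[OF assms(2)] f r u by blast
  ultimately show ?thesis unfolding v p by (simp add: blinfun.diff_left)
qed

lemma vals_comb:
  assumes "v1 \<in> Vals S T z w1" "v2 \<in> Vals S T z w2" "0 \<le> l" "l \<le> 1"
  shows "l * v1 + (1 - l) * v2 \<in> Vals S T z (l *\<^sub>R w1 + (1 - l) *\<^sub>R w2)"
proof -
  obtain p1 r1 c1 d1 where 1: "v1 = c1 + d1 - blinfun_apply z (fst p1)" "fb S p1 c1" "fb T r1 d1"
    "p1 + rho1 r1 = w1" using assms(1) unfolding Vals_def by blast
  obtain p2 r2 c2 d2 where 2: "v2 = c2 + d2 - blinfun_apply z (fst p2)" "fb S p2 c2" "fb T r2 d2"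
    "p2 + rho1 r2 = w2" using assms(2) unfolding Vals_def by blast
  have "fb S (l *\<^sub>R p1 + (1 - l) *\<^sub>R p2) (l * c1 + (1 - l) * c2)"
    using fb_convex 1 2 assms by blast
  moreover have "fb T (l *\<^sub>R r1 + (1 - l) *\<^sub>R r2) (l * d1 + (1 - l) * d2)"
    using fb_convex 1 2 assms by blast
  moreover have "(l *\<^sub>R p1 + (1 - l) *\<^sub>R p2) + rho1 (l *\<^sub>R r1 + (1 - l) *\<^sub>R r2) = l *\<^sub>R w1 + (1 - l) *\<^sub>R w2"
    unfolding rho1_comb 1(4)[symmetric] 2(4)[symmetric] by (simp add: algebra_simps)
  moreover have "l * v1 + (1 - l) * v2 = (l * c1 + (1 - l) * c2) + (l * d1 + (1 - l) * d2)
      - blinfun_apply z (fst (l *\<^sub>R p1 + (1 - l) *\<^sub>R p2))"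
    unfolding 1 2 by (simp add: blinfun.add_right blinfun.diff_right blinfun.scaleR_right algebra_simps)
  ultimately show ?thesis unfolding Vals_def by blast
qed

definition Pf where
  "Pf S T z w = Inf {v / t | t v. 0 < t \<and> v \<in> Vals S T z ((0, z) + t *\<^sub>R w)}"

lemma Pf_props:
  fixes S T :: "'a::real_normed_vector \<Rightarrow> ('a \<Rightarrow>\<^sub>L real) set"
  assumes mS: "maximal_monotone S" and mT: "maximal_monotone T"
    and hyp: "\<And>w. Vals S T z w \<noteq> {}"
  shows "sublin (Pf S T z)" and "\<And>w v. v \<in> Vals S T z ((0, z) + w) \<Longrightarrow> Pf S T z w \<le> v"
proof -
  define w0 where "w0 = ((0::'a), z)"
  define Q where "Q w = {v / t | t v. 0 < t \<and> v \<in> Vals S T z (w0 + t *\<^sub>R w)}" for w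
  have PfQ: "Pf S T z w = Inf (Q w)" for w unfolding Pf_def Q_def w0_def ..
  have Qne: "Q w \<noteq> {}" for w
  proof -
    obtain v where "v \<in> Vals S T z (w0 + 1 *\<^sub>R w)" using hyp by blast
    then have "v / 1 \<in> Q w" unfolding Q_def by (intro CollectI exI[of _ 1] exI[of _ v]) auto
    then show ?thesis by blast
  qed
  have Qlb: "- v' \<le> v / t" if "0 < t" "v \<in> Vals S T z (w0 + t *\<^sub>R w)" "v' \<in> Vals S T z (w0 - w)" for t v v' w
  proof -
    define l where "l = 1 / (1 + t)"
    have l: "0 \<le> l" "l \<le> 1" using that unfolding l_def by auto
    have "l * v + (1 - l) * v' \<in> Vals S T z (l *\<^sub>R (w0 + t *\<^sub>R w) + (1 - l) *\<^sub>R (w0 - w))"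
      by (rule vals_comb[OF that(2,3) l])
    moreover have "l *\<^sub>R (w0 + t *\<^sub>R w) + (1 - l) *\<^sub>R (w0 - w) = w0"
    proof -
      have e: "l * t - (1 - l) = 0" using that(1) unfolding l_def by (simp add: field_simps)
      have "l *\<^sub>R (w0 + t *\<^sub>R w) + (1 - l) *\<^sub>R (w0 - w) = (l + (1 - l)) *\<^sub>R w0 + (l * t - (1 - l)) *\<^sub>R w"
        by (simp add: algebra_simps)
      then show ?thesis unfolding e by simp
    qed
    ultimately have "0 \<le> l * v + (1 - l) * v'" using vals_nonneg[OF mS mT] unfolding w0_def by auto
    moreover have "l * v + (1 - l) * v' = (v + t * v') / (1 + t)"
    proof -
      have t1: "1 + t \<noteq> 0" using that(1) by simp
      have "1 - l = t / (1 + t)" unfolding l_def using t1 by (simp add: field_simps)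
      then show ?thesis unfolding l_def by (simp add: add_divide_distrib)
    qed
    ultimately have "0 \<le> (v + t * v') / (1 + t)" by simp
    then have "0 \<le> v + t * v'" using that(1) by (simp add: zero_le_divide_iff)
    then show ?thesis using that(1) by (simp add: field_simps)
  qed
  have bdd: "bdd_below (Q w)" for w
  proof -
    obtain v' where v': "v' \<in> Vals S T z (w0 - w)" using hyp by blast
    show ?thesis unfolding Q_def using Qlb[OF _ _ v'] by (intro bdd_belowI[of _ "- v'"]) auto
  qed
  have low: "Inf (Q w) \<le> v / t" if "0 < t" "v \<in> Vals S T z (w0 + t *\<^sub>R w)" for w v t
    using bdd that by (intro cInf_lower) (auto simp: Q_def)
  have great: "c \<le> Inf (Q w)" if "\<And>t v. 0 < t \<Longrightarrow> v \<in> Vals S T z (w0 + t *\<^sub>R w) \<Longrightarrow> c \<le> v / t" for c w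
    using Qne that by (intro cInf_greatest) (auto simp: Q_def)
  show "Pf S T z w \<le> v" if "v \<in> Vals S T z ((0, z) + w)" for w v
    using low[of 1 v w] that unfolding PfQ w0_def by simp
  have add: "Inf (Q (x + y)) \<le> Inf (Q x) + Inf (Q y)" for x y
  proof -
    have key: "Inf (Q (x + y)) \<le> v1 / t + v2 / s"
      if t: "0 < t" "v1 \<in> Vals S T z (w0 + t *\<^sub>R x)" and s: "0 < s" "v2 \<in> Vals S T z (w0 + s *\<^sub>R y)"
      for t s v1 v2
    proof -
      define l where "l = s / (t + s)"
      have l: "0 \<le> l" "l \<le> 1" using t s unfolding l_def by auto
      have "l * v1 + (1 - l) * v2 \<in> Vals S T z (l *\<^sub>R (w0 + t *\<^sub>R x) + (1 - l) *\<^sub>R (w0 + s *\<^sub>R y))"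
        by (rule vals_comb[OF t(2) s(2) l])
      moreover have "l *\<^sub>R (w0 + t *\<^sub>R x) + (1 - l) *\<^sub>R (w0 + s *\<^sub>R y) = w0 + (t * s / (t + s)) *\<^sub>R (x + y)"
      proof -
        have e: "l * t = t * s / (t + s)" "(1 - l) * s = t * s / (t + s)" using t s unfolding l_def
          by (auto simp: field_simps)
        have "l *\<^sub>R (w0 + t *\<^sub>R x) + (1 - l) *\<^sub>R (w0 + s *\<^sub>R y)
           = (l + (1 - l)) *\<^sub>R w0 + (l * t) *\<^sub>R x + ((1 - l) * s) *\<^sub>R y"
          by (simp add: algebra_simps)
        also have "\<dots> = w0 + (t * s / (t + s)) *\<^sub>R (x + y)"
          unfolding e by (simp add: scaleR_add_right)
        finally show ?thesis .
      qed
      ultimately have "Inf (Q (x + y)) \<le> (l * v1 + (1 - l) * v2) / (t * s / (t + s))"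
        using t s by (intro low) auto
      also have "\<dots> = v1 / t + v2 / s"
      proof -
        have ts: "t + s \<noteq> 0" "t \<noteq> 0" "s \<noteq> 0" using t s by auto
        have "1 - l = t / (t + s)" unfolding l_def using ts by (simp add: field_simps)
        then have "l * v1 + (1 - l) * v2 = (s * v1 + t * v2) / (t + s)"
          unfolding l_def by (simp add: add_divide_distrib)
        then have "(l * v1 + (1 - l) * v2) / (t * s / (t + s)) = (s * v1 + t * v2) / (t * s)"
          using ts by simp
        also have "\<dots> = v1 / t + v2 / s" using ts by (simp add: field_simps)
        finally show ?thesis .
      qed
      finally show ?thesis .
    qed
    have "Inf (Q (x + y)) - v2 / s \<le> Inf (Q x)" if s: "0 < s" "v2 \<in> Vals S T z (w0 + s *\<^sub>R y)" for s v2
      using key[OF _ _ s] by (intro great) (auto simp: algebra_simps)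
    then have "Inf (Q (x + y)) - Inf (Q x) \<le> Inf (Q y)"
      by (intro great) (auto simp: algebra_simps)
    then show ?thesis by linarith
  qed
  have hom: "Inf (Q (a *\<^sub>R x)) = a * Inf (Q x)" if a: "a > 0" for a x
  proof (rule antisym)
    have "Inf (Q (a *\<^sub>R x)) / a \<le> Inf (Q x)"
    proof (rule great)
      fix t v assume tv: "0 < t" "v \<in> Vals S T z (w0 + t *\<^sub>R x)"
      have "Inf (Q (a *\<^sub>R x)) \<le> v / (t / a)"
        using tv a by (intro low) auto
      then show "Inf (Q (a *\<^sub>R x)) / a \<le> v / t" using a tv by (simp add: field_simps)
    qed
    then show "Inf (Q (a *\<^sub>R x)) \<le> a * Inf (Q x)" using a by (simp add: field_simps)
    show "a * Inf (Q x) \<le> Inf (Q (a *\<^sub>R x))"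
    proof (rule great)
      fix t v assume tv: "0 < t" "v \<in> Vals S T z (w0 + t *\<^sub>R (a *\<^sub>R x))"
      have "Inf (Q x) \<le> v / (t * a)" using tv a by (intro low) auto
      then show "a * Inf (Q x) \<le> v / t" using a tv by (simp add: field_simps)
    qed
  qed
  show "sublin (Pf S T z)" unfolding sublin_def PfQ using add hom by blast
qed



lemma half_sums: "(\<lambda>j. (1/2::real) ^ Suc j) sums 1"
proof -
  have "(\<lambda>j. (1/2::real) ^ j) sums (1 / (1 - 1/2))" by (rule geometric_sums) simp
  from sums_mult[OF this, of "1/2"] show ?thesis by simp
qed

lemma avg_bound:
  fixes L :: "'b::real_normed_vector \<Rightarrow> real"
  assumes L: "bounded_linear L" and s: "(\<lambda>j. (1/2::real) ^ Suc j *\<^sub>R p j) sums P"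
    and b: "\<And>j. L (p j) + \<kappa> \<le> B"
  shows "L P + \<kappa> \<le> B"
proof -
  interpret L: bounded_linear L by (rule L)
  have "(\<lambda>j. L ((1/2::real) ^ Suc j *\<^sub>R p j)) sums L P" by (rule L.sums[OF s])
  then have 1: "(\<lambda>j. (1/2::real) ^ Suc j * L (p j)) sums L P" by (simp add: L.scaleR)
  have 2: "(\<lambda>j. (1/2::real) ^ Suc j * \<kappa>) sums (1 * \<kappa>)" using sums_mult2[OF half_sums] by blast
  have 3: "(\<lambda>j. (1/2::real) ^ Suc j * B) sums (1 * B)" using sums_mult2[OF half_sums] by blast
  have S4: "(\<lambda>j. (1/2::real) ^ Suc j * L (p j) + (1/2::real) ^ Suc j * \<kappa>) sums (L P + 1 * \<kappa>)"
    by (rule sums_add[OF 1 2])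
  have le: "(1/2::real) ^ Suc j * L (p j) + (1/2::real) ^ Suc j * \<kappa> \<le> (1/2::real) ^ Suc j * B" for j
  proof -
    have "(1/2::real) ^ Suc j * (L (p j) + \<kappa>) \<le> (1/2::real) ^ Suc j * B"
      using b[of j] by (intro mult_left_mono) auto
    then show ?thesis by (simp only: distrib_left)
  qed
  have "L P + 1 * \<kappa> \<le> 1 * B" by (rule sums_le[OF le S4 3])
  then show ?thesis by simp
qed

lemma series_rep:
  fixes K :: "'b::banach set"
  assumes \<epsilon>: "\<epsilon> > 0" and bc: "ball c \<epsilon> \<subseteq> closure K" and u: "norm u < \<epsilon>"
  shows "\<exists>k. (\<forall>j. k j \<in> K) \<and> (\<lambda>j. (1/2::real) ^ Suc j *\<^sub>R k j) sums (c + (1/2::real) *\<^sub>R u)"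
proof -
  have ex: "\<exists>k\<in>K. norm (c + 2 *\<^sub>R e - k) < \<epsilon> / 2" if "norm e < \<epsilon> / 2" for e
  proof -
    have "c + 2 *\<^sub>R e \<in> ball c \<epsilon>" using that by (simp add: dist_norm)
    then have "c + 2 *\<^sub>R e \<in> closure K" using bc by blast
    then obtain k where "k \<in> K" "dist k (c + 2 *\<^sub>R e) < \<epsilon> / 2"
      using \<epsilon> unfolding closure_approachable by (metis half_gt_zero)
    then show ?thesis by (auto simp: dist_norm norm_minus_commute)
  qed
  have "\<forall>e. \<exists>k. norm e < \<epsilon> / 2 \<longrightarrow> k \<in> K \<and> norm (c + 2 *\<^sub>R e - k) < \<epsilon> / 2"
    using ex by blast
  then have "\<exists>Kf. \<forall>e. norm e < \<epsilon> / 2 \<longrightarrow> Kf e \<in> K \<and> norm (c + 2 *\<^sub>R e - Kf e) < \<epsilon> / 2"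
    by (rule choice)
  then obtain Kf where Kf: "\<And>e. norm e < \<epsilon> / 2 \<Longrightarrow> Kf e \<in> K \<and> norm (c + 2 *\<^sub>R e - Kf e) < \<epsilon> / 2"
    by blast
  define e where "e = rec_nat ((1/2::real) *\<^sub>R u) (\<lambda>j x. c + 2 *\<^sub>R x - Kf x)"
  have e0: "e 0 = (1/2::real) *\<^sub>R u" unfolding e_def by simp
  have eS: "e (Suc j) = c + 2 *\<^sub>R e j - Kf (e j)" for j unfolding e_def by simp
  have en: "norm (e j) < \<epsilon> / 2" for j
  proof (induction j)
    case 0 then show ?case using u e0 by simp
  next
    case (Suc j) then show ?case using Kf eS by simp
  qed
  define k where "k j = Kf (e j)" for j
  have kK: "k j \<in> K" for j using Kf en unfolding k_def by blast
  have ident: "(1/2::real) *\<^sub>R u = (\<Sum>j<N. (1/2::real) ^ Suc j *\<^sub>R (k j - c)) + (1/2::real) ^ N *\<^sub>R e N" for N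
  proof (induction N)
    case 0 then show ?case using e0 by simp
  next
    case (Suc N)
    have "e N = (1/2::real) *\<^sub>R (k N - c) + (1/2::real) *\<^sub>R e (Suc N)"
      unfolding eS k_def by (simp add: algebra_simps)
    then have "(1/2::real) ^ N *\<^sub>R e N = (1/2::real) ^ Suc N *\<^sub>R (k N - c) + (1/2::real) ^ Suc N *\<^sub>R e (Suc N)"
      by (simp add: scaleR_add_right)
    then show ?case using Suc by (simp add: algebra_simps)
  qed
  have tail: "(\<lambda>N. (1/2::real) ^ N *\<^sub>R e N) \<longlonglongrightarrow> 0"
  proof (rule Lim_null_comparison[where g = "\<lambda>N. (1/2::real) ^ N * (\<epsilon> / 2)"])
    show "\<forall>\<^sub>F N in sequentially. norm ((1/2::real) ^ N *\<^sub>R e N) \<le> (1/2) ^ N * (\<epsilon> / 2)"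
      using en by (intro always_eventually allI) (simp add: less_imp_le mult_left_mono)
    show "(\<lambda>N. (1/2::real) ^ N * (\<epsilon> / 2)) \<longlonglongrightarrow> 0"
      by (intro tendsto_mult_left_zero LIMSEQ_power_zero) simp
  qed
  have "(\<lambda>j. (1/2::real) ^ Suc j *\<^sub>R (k j - c)) sums ((1/2::real) *\<^sub>R u)"
    unfolding sums_def
  proof -
    have "(\<lambda>N. (1/2::real) *\<^sub>R u - (1/2::real) ^ N *\<^sub>R e N) \<longlonglongrightarrow> (1/2::real) *\<^sub>R u - 0"
      by (intro tendsto_diff tendsto_const tail)
    moreover have "(\<lambda>N. (1/2::real) *\<^sub>R u - (1/2::real) ^ N *\<^sub>R e N) = (\<lambda>N. \<Sum>j<N. (1/2::real) ^ Suc j *\<^sub>R (k j - c))"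
    proof
      fix N
      show "(1/2::real) *\<^sub>R u - (1/2::real) ^ N *\<^sub>R e N = (\<Sum>j<N. (1/2::real) ^ Suc j *\<^sub>R (k j - c))"
        by (subst ident[of N]) simp
    qed
    ultimately show "(\<lambda>N. \<Sum>j<N. (1/2::real) ^ Suc j *\<^sub>R (k j - c)) \<longlonglongrightarrow> (1/2::real) *\<^sub>R u" by simp
  qed
  moreover have "(\<lambda>j. (1/2::real) ^ Suc j *\<^sub>R c) sums (1 *\<^sub>R c)"
    by (rule sums_scaleR_left[OF half_sums])
  ultimately have "(\<lambda>j. (1/2::real) ^ Suc j *\<^sub>R (k j - c) + (1/2::real) ^ Suc j *\<^sub>R c) sums ((1/2::real) *\<^sub>R u + 1 *\<^sub>R c)"
    by (rule sums_add)
  then have "(\<lambda>j. (1/2::real) ^ Suc j *\<^sub>R k j) sums (c + (1/2::real) *\<^sub>R u)"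
    by (simp add: algebra_simps)
  then show ?thesis using kK by blast
qed



lemma bl_rho1: "bounded_linear (rho1 :: 'a::real_normed_vector \<times> 'b::real_normed_vector \<Rightarrow> 'a \<times> 'b)"
proof -
  have "rho1 = (\<lambda>p :: 'a \<times> 'b. (- fst p, snd p))" unfolding rho1_def by (rule ext) simp
  moreover have "bounded_linear (\<lambda>p :: 'a \<times> 'b. (- fst p, snd p))"
    by (intro bounded_linear_Pair bounded_linear_minus bounded_linear_fst bounded_linear_snd)
  ultimately show ?thesis by simp
qed

lemma bl_aff:
  fixes g :: "'a::real_normed_vector \<times> ('a \<Rightarrow>\<^sub>L real)"
  shows "bounded_linear (\<lambda>q :: 'a \<times> ('a \<Rightarrow>\<^sub>L real). blinfun_apply (snd g) (fst q) + blinfun_apply (snd q) (fst g))"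
proof (rule bounded_linear_add)
  show "bounded_linear (\<lambda>q :: 'a \<times> ('a \<Rightarrow>\<^sub>L real). blinfun_apply (snd g) (fst q))"
    by (rule bounded_linear_compose[OF blinfun.bounded_linear_right bounded_linear_fst])
  show "bounded_linear (\<lambda>q :: 'a \<times> ('a \<Rightarrow>\<^sub>L real). blinfun_apply (snd q) (fst g))"
    by (rule bounded_linear_compose[OF blinfun.bounded_linear_left bounded_linear_snd])
qed

lemma bl_zfst:
  fixes z :: "'a::real_normed_vector \<Rightarrow>\<^sub>L real"
  shows "bounded_linear (\<lambda>q :: 'a \<times> ('a \<Rightarrow>\<^sub>L real). - blinfun_apply z (fst q))"
  by (intro bounded_linear_minus bounded_linear_compose[OF blinfun.bounded_linear_right bounded_linear_fst])

lemma half_summable: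
  fixes p :: "nat \<Rightarrow> 'b::banach"
  assumes "\<And>j. norm (p j) \<le> B"
  shows "(\<lambda>j. (1/2::real) ^ Suc j *\<^sub>R p j) sums (\<Sum>j. (1/2::real) ^ Suc j *\<^sub>R p j)"
proof -
  have "summable (\<lambda>j. (1/2::real) ^ Suc j * B)" using sums_summable[OF sums_mult2[OF half_sums]] by blast
  then have "summable (\<lambda>j. (1/2::real) ^ Suc j *\<^sub>R p j)"
    by (rule summable_comparison_test'[where N = 0]) (simp add: assms mult_left_mono)
  then show ?thesis by (rule summable_sums)
qed

lemma baire_bound:
  fixes S T :: "'a::banach \<Rightarrow> ('a \<Rightarrow>\<^sub>L real) set"
  assumes hyp: "\<forall>w. \<exists>p r c1 c2. fb S p c1 \<and> fb T r c2 \<and> w = p + rho1 r"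
  shows "\<exists>\<delta>>0. \<exists>M. \<forall>w. norm w < \<delta> \<longrightarrow> (\<exists>v\<in>Vals S T z ((0, z) + w). v \<le> M)"
proof -
  define C where "C n = {p + rho1 r | p r. norm p \<le> real n \<and> norm r \<le> real n \<and> fb S p (real n) \<and> fb T r (real n)}" for n :: nat
  have cover: "\<exists>n. w \<in> C n" for w
  proof -
    obtain p r c1 c2 where pr: "fb S p c1" "fb T r c2" "w = p + rho1 r" using hyp by blast
    define n where "n = nat \<lceil>max (max (norm p) (norm r)) (max c1 c2)\<rceil>"
    have "max (max (norm p) (norm r)) (max c1 c2) \<le> real n" unfolding n_def by (rule real_nat_ceiling_ge)
    then have "norm p \<le> real n" "norm r \<le> real n" "c1 \<le> real n" "c2 \<le> real n" by auto
    then have "w \<in> C n" unfolding C_def using pr fb_mono by blast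
    then show ?thesis by blast
  qed
  have "\<exists>n. interior (closure (C n)) \<noteq> {}"
  proof (rule ccontr)
    assume "\<not> (\<exists>n. interior (closure (C n)) \<noteq> {})"
    then have e: "interior (closure (C n)) = {}" for n by blast
    have "euclidean interior_of \<Union> (range (\<lambda>n. closure (C n))) = {}"
    proof (rule Baire_category_alt)
      show "completely_metrizable_space (euclidean :: ('a \<times> ('a \<Rightarrow>\<^sub>L real)) topology) \<or>
        locally_compact_space (euclidean :: ('a \<times> ('a \<Rightarrow>\<^sub>L real)) topology) \<and> regular_space euclidean"
        using completely_metrizable_space_euclidean by blast
      show "countable (range (\<lambda>n. closure (C n)))" by (intro countable_image) simp
      show "closedin euclidean T \<and> euclidean interior_of T = {}" if "T \<in> range (\<lambda>n. closure (C n))" for T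
        using that e by (auto simp: closed_closedin[symmetric])
    qed
    moreover have "\<Union> (range (\<lambda>n. closure (C n))) = UNIV"
      using cover closure_subset by blast
    ultimately show False by simp
  qed
  then obtain n x where "x \<in> interior (closure (C n))" by blast
  then obtain \<epsilon> where \<epsilon>: "\<epsilon> > 0" and bc: "ball x \<epsilon> \<subseteq> closure (C n)"
    by (meson open_contains_ball open_interior interior_subset subset_trans)
  define M0 where "M0 = 2 * real n + norm z * real n"
  have val: "\<exists>v\<in>Vals S T z (x + (1/2::real) *\<^sub>R u). v \<le> M0" if u: "norm u < \<epsilon>" for u
  proof -
    obtain k where kC: "\<And>j. k j \<in> C n" and ks: "(\<lambda>j. (1/2::real) ^ Suc j *\<^sub>R k j) sums (x + (1/2::real) *\<^sub>R u)"
      using series_rep[OF \<epsilon> bc u] by blast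
    have "\<forall>j. \<exists>q. norm (fst q) \<le> real n \<and> norm (snd q) \<le> real n \<and> fb S (fst q) (real n) \<and> fb T (snd q) (real n)
       \<and> k j = fst q + rho1 (snd q)"
      using kC unfolding C_def by fastforce
    then obtain qf where qf: "\<And>j. norm (fst (qf j)) \<le> real n \<and> norm (snd (qf j)) \<le> real n \<and> fb S (fst (qf j)) (real n)
       \<and> fb T (snd (qf j)) (real n) \<and> k j = fst (qf j) + rho1 (snd (qf j))"
      by metis
    define p where "p j = fst (qf j)" for j
    define r where "r j = snd (qf j)" for j
    define P where "P = (\<Sum>j. (1/2::real) ^ Suc j *\<^sub>R p j)"
    define R where "R = (\<Sum>j. (1/2::real) ^ Suc j *\<^sub>R r j)"
    have Ps: "(\<lambda>j. (1/2::real) ^ Suc j *\<^sub>R p j) sums P" unfolding P_def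
      by (rule half_summable[where B = "real n"]) (use qf[unfolded p_def[symmetric]] in blast)
    have Rs: "(\<lambda>j. (1/2::real) ^ Suc j *\<^sub>R r j) sums R" unfolding R_def
      by (rule half_summable[where B = "real n"]) (use qf[unfolded r_def[symmetric]] in blast)
    interpret rho: bounded_linear "rho1 :: 'a \<times> ('a \<Rightarrow>\<^sub>L real) \<Rightarrow> _" by (rule bl_rho1)
    have "(\<lambda>j. rho1 ((1/2::real) ^ Suc j *\<^sub>R r j)) sums rho1 R" by (rule rho.sums[OF Rs])
    then have "(\<lambda>j. (1/2::real) ^ Suc j *\<^sub>R p j + rho1 ((1/2::real) ^ Suc j *\<^sub>R r j)) sums (P + rho1 R)"
      by (rule sums_add[OF Ps])
    moreover have "(1/2::real) ^ Suc j *\<^sub>R p j + rho1 ((1/2::real) ^ Suc j *\<^sub>R r j) = (1/2::real) ^ Suc j *\<^sub>R k j" for j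
      using qf[of j] unfolding p_def r_def by (simp add: rho.scaleR scaleR_add_right)
    ultimately have "(\<lambda>j. (1/2::real) ^ Suc j *\<^sub>R k j) sums (P + rho1 R)" by simp
    then have eq: "P + rho1 R = x + (1/2::real) *\<^sub>R u" using ks sums_unique2 by blast
    have fbP: "fb S P (real n)" unfolding fb_def
    proof
      fix g assume g: "g \<in> graph S"
      have "blinfun_apply (snd g) (fst P) + blinfun_apply (snd P) (fst g) + (- blinfun_apply (snd g) (fst g)) \<le> real n"
      proof (rule avg_bound[OF bl_aff Ps])
        fix j show "blinfun_apply (snd g) (fst (p j)) + blinfun_apply (snd (p j)) (fst g) + - blinfun_apply (snd g) (fst g) \<le> real n"
          using qf[of j] g unfolding fb_def aff_def p_def by auto
      qed
      then show "aff g P \<le> real n" unfolding aff_def by simp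
    qed
    have fbR: "fb T R (real n)" unfolding fb_def
    proof
      fix g assume g: "g \<in> graph T"
      have "blinfun_apply (snd g) (fst R) + blinfun_apply (snd R) (fst g) + (- blinfun_apply (snd g) (fst g)) \<le> real n"
      proof (rule avg_bound[OF bl_aff Rs])
        fix j show "blinfun_apply (snd g) (fst (r j)) + blinfun_apply (snd (r j)) (fst g) + - blinfun_apply (snd g) (fst g) \<le> real n"
          using qf[of j] g unfolding fb_def aff_def r_def by auto
      qed
      then show "aff g R \<le> real n" unfolding aff_def by simp
    qed
    have zb: "- blinfun_apply z (fst P) + 0 \<le> norm z * real n"
    proof (rule avg_bound[OF bl_zfst Ps])
      fix j
      have "- blinfun_apply z (fst (p j)) \<le> norm z * norm (fst (p j))"
        using norm_blinfun[of z "fst (p j)"] by simp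
      also have "norm (fst (p j)) \<le> norm (p j)" using norm_fst_le[of "fst (p j)" "snd (p j)"] by simp
      then have "norm z * norm (fst (p j)) \<le> norm z * real n"
        using qf[of j] unfolding p_def by (meson mult_left_mono norm_ge_zero order_trans)
      finally show "- blinfun_apply z (fst (p j)) + 0 \<le> norm z * real n" by simp
    qed
    have "real n + real n - blinfun_apply z (fst P) \<in> Vals S T z (x + (1/2::real) *\<^sub>R u)"
      unfolding Vals_def using fbP fbR eq by blast
    moreover have "real n + real n - blinfun_apply z (fst P) \<le> M0" using zb unfolding M0_def by simp
    ultimately show ?thesis by blast
  qed
  obtain v1 where v1: "v1 \<in> Vals S T z (2 *\<^sub>R ((0::'a), z) - x)"
  proof -
    obtain p r c1 c2 where "fb S p c1" "fb T r c2" "p + rho1 r = 2 *\<^sub>R ((0::'a), z) - x" using hyp by metis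
    then have "c1 + c2 - blinfun_apply z (fst p) \<in> Vals S T z (2 *\<^sub>R ((0::'a), z) - x)" unfolding Vals_def by blast
    then show ?thesis using that by blast
  qed
  have "\<forall>w. norm w < \<epsilon> / 4 \<longrightarrow> (\<exists>v\<in>Vals S T z ((0, z) + w). v \<le> v1 / 2 + M0 / 2)"
  proof (intro allI impI)
    fix w :: "'a \<times> ('a \<Rightarrow>\<^sub>L real)" assume w: "norm w < \<epsilon> / 4"
    have "norm (4 *\<^sub>R w) < \<epsilon>" using w by simp
    then obtain v2 where v2: "v2 \<in> Vals S T z (x + (1/2::real) *\<^sub>R (4 *\<^sub>R w))" "v2 \<le> M0" using val by blast
    have "(1/2) * v1 + (1 - 1/2) * v2 \<in> Vals S T z ((1/2::real) *\<^sub>R (2 *\<^sub>R ((0::'a), z) - x) + (1 - 1/2) *\<^sub>R (x + (1/2::real) *\<^sub>R (4 *\<^sub>R w)))"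
      by (rule vals_comb[OF v1 v2(1)]) auto
    moreover have "(1/2::real) *\<^sub>R (2 *\<^sub>R ((0::'a), z) - x) + (1 - 1/2) *\<^sub>R (x + (1/2::real) *\<^sub>R (4 *\<^sub>R w)) = ((0::'a), z) + w"
      by (simp add: algebra_simps)
    ultimately have "(1/2) * v1 + (1 - 1/2) * v2 \<in> Vals S T z (((0::'a), z) + w)" by simp
    moreover have "(1/2) * v1 + (1 - 1/2) * v2 \<le> v1 / 2 + M0 / 2" using v2(2) by simp
    ultimately show "\<exists>v\<in>Vals S T z ((0, z) + w). v \<le> v1 / 2 + M0 / 2" by blast
  qed
  then show ?thesis using \<epsilon> by (intro exI[of _ "\<epsilon> / 4"] conjI exI[of _ "v1 / 2 + M0 / 2"]) auto
qed



lemma final_step: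
  assumes mS: "maximal_monotone S" and mT: "maximal_monotone T"
    and ineq: "\<And>s s' u t'. s' \<in> S s \<Longrightarrow> t' \<in> T u \<Longrightarrow>
       0 \<le> blinfun_apply (s' - a) (s - y) + blinfun_apply (t' - b) (u - y)"
  shows "a \<in> S y \<and> b \<in> T y"
proof -
  have sw: "blinfun_apply (a - s') (y - s) = blinfun_apply (s' - a) (s - y)" for a s' :: "'a \<Rightarrow>\<^sub>L real" and y s :: 'a
    by (simp add: blinfun.diff_left blinfun.diff_right)
  have A: "a \<in> S y"
  proof (rule ccontr)
    assume na: "a \<notin> S y"
    then obtain s s' where ss: "s' \<in> S s" "blinfun_apply (s' - a) (s - y) < 0"
      using max_mono_in[OF mS, of a y] sw by force
    have "0 \<le> blinfun_apply (b - t') (y - u)" if "t' \<in> T u" for u t'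
      using ineq[OF ss(1) that] ss(2) sw by (metis add_less_same_cancel2 less_trans not_le)
    then have "b \<in> T y" by (rule max_mono_in[OF mT])
    from ineq[OF ss(1) this] ss(2) show False by simp
  qed
  have B: "b \<in> T y"
  proof (rule ccontr)
    assume na: "b \<notin> T y"
    then obtain u t' where ss: "t' \<in> T u" "blinfun_apply (t' - b) (u - y) < 0"
      using max_mono_in[OF mT, of b y] sw by force
    have "0 \<le> blinfun_apply (a - s') (y - s)" if "s' \<in> S s" for s s'
      using ineq[OF that ss(1)] ss(2) sw by (metis add_less_same_cancel1 less_trans not_le)
    then have "a \<in> S y" by (rule max_mono_in[OF mS])
    from ineq[OF this ss(1)] ss(2) show False by simp
  qed
  from A B show ?thesis ..
qed

theorem theorem7p2:
  fixes S T :: "'a::banach \<Rightarrow> ('a \<Rightarrow>\<^sub>L real) set"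
  assumes "\<exists>x::'a. x \<noteq> 0"
    and "reflexive_space TYPE('a)"
    and "maximal_monotone S" and "maximal_monotone T"
    and "{p + q | p q. p \<in> dom_fitz S \<and> q \<in> rho1 ` dom_fitz T} = UNIV"
  shows "(\<Union>x. op_sum S T x) = UNIV"
proof -
  note mS = assms(3) and mT = assms(4)
  have hyp: "\<forall>w. \<exists>p r c1 c2. fb S p c1 \<and> fb T r c2 \<and> w = p + rho1 r"
  proof
    fix w :: "'a \<times> ('a \<Rightarrow>\<^sub>L real)"
    have "w \<in> {p + q | p q. p \<in> dom_fitz S \<and> q \<in> rho1 ` dom_fitz T}" using assms(5) by simp
    then obtain p r where "p \<in> dom_fitz S" "r \<in> dom_fitz T" "w = p + rho1 r" by blast
    then show "\<exists>p r c1 c2. fb S p c1 \<and> fb T r c2 \<and> w = p + rho1 r" using dom_fitz_fb by metis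
  qed
  have "z \<in> (\<Union>x. op_sum S T x)" for z
  proof -
    have ne: "Vals S T z w \<noteq> {}" for w
    proof -
      obtain p r c1 c2 where "fb S p c1" "fb T r c2" "w = p + rho1 r" using hyp by blast
      then have "c1 + c2 - blinfun_apply z (fst p) \<in> Vals S T z w" unfolding Vals_def by blast
      then show ?thesis by blast
    qed
    note Pf = Pf_props[OF mS mT ne]
    obtain l where l: "linear l" "\<And>x. l x \<le> Pf S T z x" using hahn_banach_sublin[OF Pf(1)] by blast
    interpret l: linear l by (rule l(1))
    obtain \<delta> M where d: "\<delta> > 0" and dM: "\<And>w. norm w < \<delta> \<Longrightarrow> \<exists>v\<in>Vals S T z ((0, z) + w). v \<le> M"
      using baire_bound[OF hyp] by blast
    have lle: "l w \<le> v" if "v \<in> Vals S T z ((0, z) + w)" for w v using l(2) Pf(2)[OF that] by (meson order_trans)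
    have lM: "\<bar>l w\<bar> \<le> M" if "norm w < \<delta>" for w
    proof -
      have "l w \<le> M" using dM[OF that] lle by (meson order_trans)
      moreover have "norm (- w) < \<delta>" using that by simp
      then have "l (- w) \<le> M" using dM lle by (meson order_trans)
      ultimately show ?thesis using l.neg by simp
    qed
    have "bounded_linear l"
    proof (rule bounded_linear_intro[where K = "2 * M / \<delta>"])
      show "l (x + y) = l x + l y" for x y by (rule l.add)
      show "l (r *\<^sub>R x) = r *\<^sub>R l x" for r x by (simp add: l.scale)
      show "norm (l x) \<le> norm x * (2 * M / \<delta>)" for x
      proof (cases "x = 0")
        case True then show ?thesis using l.zero by simp
      next
        case False
        define c where "c = \<delta> / (2 * norm x)"
        have c: "c > 0" using d False unfolding c_def by auto
        have "norm (c *\<^sub>R x) < \<delta>" using d False unfolding c_def by simp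
        then have "\<bar>l (c *\<^sub>R x)\<bar> \<le> M" by (rule lM)
        then have "\<bar>c * l x\<bar> \<le> M" using l.scale by simp
        then have "c * \<bar>l x\<bar> \<le> M" using c by (simp add: abs_mult)
        then have "\<bar>l x\<bar> \<le> M / c" using c by (simp add: field_simps)
        also have "M / c = norm x * (2 * M / \<delta>)" using d False unfolding c_def by (simp add: field_simps)
        finally show ?thesis by simp
      qed
    qed
    then have bl: "bounded_linear l" .
    define l1 where "l1 x = l (x, 0)" for x :: 'a
    define l2 where "l2 d = l (0, d)" for d :: "'a \<Rightarrow>\<^sub>L real"
    have bl1: "bounded_linear l1" unfolding l1_def
      by (rule bounded_linear_compose[OF bl]) (rule bounded_linear_Pair[OF bounded_linear_ident bounded_linear_zero])
    have bl2: "bounded_linear l2" unfolding l2_def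
      by (rule bounded_linear_compose[OF bl]) (rule bounded_linear_Pair[OF bounded_linear_zero bounded_linear_ident])
    define y' where "y' = Blinfun l1"
    have y': "blinfun_apply y' x = l (x, 0)" for x unfolding y'_def using bl1 l1_def by (simp add: bounded_linear_Blinfun_apply)
    obtain y where y: "\<And>d. l (0, d) = blinfun_apply d y"
    proof -
      from assms(2) obtain y where "\<forall>d. blinfun_apply (Blinfun l2) d = blinfun_apply d y"
        unfolding reflexive_space_def by blast
      then show ?thesis using that bl2 l2_def by (simp add: bounded_linear_Blinfun_apply)
    qed
    have ldec: "l (x, d) = blinfun_apply y' x + blinfun_apply d y" for x d
    proof -
      have "l (x, d) = l ((x, 0) + (0, d))" by simp
      also have "\<dots> = l (x, 0) + l (0, d)" by (rule l.add)
      finally show ?thesis using y y' by simp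
    qed
    define a where "a = z + y'"
    define b where "b = - y'"
    have "a \<in> S y \<and> b \<in> T y"
    proof (rule final_step[OF mS mT])
      fix s s' u t' assume s: "s' \<in> S s" and t: "t' \<in> T u"
      have "fb S (s, s') (blinfun_apply s' s)" using graph_fb mS s unfolding maximal_monotone_def by blast
      moreover have "fb T (u, t') (blinfun_apply t' u)" using graph_fb mT t unfolding maximal_monotone_def by blast
      moreover have "(s, s') + rho1 (u, t') = (0, z) + (s - u, s' + t' - z)" unfolding rho1_def by simp
      ultimately have "blinfun_apply s' s + blinfun_apply t' u - blinfun_apply z (fst (s, s'))
         \<in> Vals S T z ((0, z) + (s - u, s' + t' - z))" unfolding Vals_def by blast
      then have "l (s - u, s' + t' - z) \<le> blinfun_apply s' s + blinfun_apply t' u - blinfun_apply z s"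
        using lle by fastforce
      then show "0 \<le> blinfun_apply (s' - a) (s - y) + blinfun_apply (t' - b) (u - y)"
        unfolding ldec a_def b_def
        by (simp add: blinfun.diff_left blinfun.diff_right blinfun.add_left blinfun.add_right blinfun.minus_left algebra_simps)
    qed
    moreover have "z = a + b" unfolding a_def b_def by simp
    ultimately have "z \<in> op_sum S T y" unfolding op_sum_def by blast
    then show ?thesis by blast
  qed
  then show ?thesis by blast
qed


end
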